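(* For any frozen activation pattern $R$, the unique harmonic extension of the boundary data satisfies $z^{(\ell)*} = \overline{W}^{(\ell)}\overline{a}^{(\ell-1)*}$ and $a^{(\ell)*} = R^{(\ell)}\,z^{(\ell)*}$ for all layers, with $\hat{y}^* = z^{(k+1)*}$. In particular, when $\overline{\mathbf{a}}^{(0)}$ is fixed to $\overline{\mathbf{x}}$, only the forward-pass activation pattern (i.e. $\mathbf{z}^{(\ell)}=W^{(\ell)}\mathbf{a}^{(\ell-1)}+b^{(\ell)}$, $\mathbf{a}^{(\ell)}=\mathrm{ReLU}(\mathbf{z}^{(\ell)})$) produces a harmonic extension that is also a global section.
   Context: Consider a feedforward ReLU network with $k$ hidden layers, widths $n_0,\dots,n_{k+1}$, weights $W^{(\ell)}$, biases $b^{(\ell)}$, identity output activation. Define $\overline{W}^{(\ell)} = (W^{(\ell)}\mid \mathrm{diag}(b^{(\ell)}))$, $\overline{a}^{(\ell)} = (a^{(\ell)}, \mathbf{1}_{n_{\ell+1}})$, $\overline{a}^{(0)}=\overline{\mathbf{x}}=(\mathbf{x},\mathbf{1}_{n_1})$. A cellular sheaf is built on the path graph $v_x - v_{z^{(1)}} - v_{a^{(1)}} - \cdots - v_{a^{(k)}} - v_{z^{(k+1)}} - v_y$; writing $\mathcal{F}_{v,e}$ for the restriction map from vertex $v$ to incident edge $e$, the weight edge from $v_{a^{(\ell-1)}}$ to $v_{z^{(\ell)}}$ has maps $\overline{W}^{(\ell)}$ and $I$, the activation edge from $v_{z^{(\ell)}}$ to $v_{a^{(\ell)}}$ has maps $R^{(\ell)}$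 (diagonal $0/1$) and the projection $P_{n_\ell}=(I_{n_\ell}\ 0)$, and the output edge from $v_{z^{(k+1)}}$ to $v_y$ has maps $I$ and $I$. The coboundary is $(\delta x)_e=\mathcal{F}_{v,e}x_v-\mathcal{F}_{u,e}x_u$ for $e=u\to v$. The boundary data $u$ consists of the input stalk at $v_x$ and the ones blocks in each $v_{a^{(\ell)}}$ stalk; the free coordinates are $\omega=(z^{(1)},a^{(1)},\dots,z^{(k+1)},\hat y)$. The harmonic extension is the minimizer of $\|\delta\overline{\omega}\|^2$ over $\omega$ with the boundary data fixed; it is unique because the restricted coboundary $\delta_\Omega$ is unitriangular (determinant 1). In the actual (state-dependent) sheaf, $R^{(\ell)}_{jj}=1$ iff the current $z^{(\ell)}_j\ge 0$; a global section is a cochain with $\delta\overline{\omega}=0$. Uniqueness of the self-consistent pattern assumes no pre-activation coordinate vanishes (a generic condition in the weights). *)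

theory Defs
  imports Main "HOL.Real"
begin

text \<open>Vectors are functions nat => real, matrices nat => nat => real; all
dimensions are kept explicit. Layer widths are n 0, ..., n (k+1).
W l, b l (for l = 1..k+1) are the weight matrix and bias of layer l.\<close>

definition mv :: "(nat \<Rightarrow> nat \<Rightarrow> real) \<Rightarrow> nat \<Rightarrow> (nat \<Rightarrow> real) \<Rightarrow> nat \<Rightarrow> real" where
  "mv M m v i = (\<Sum>j<m. M i j * v j)"

text \<open>Augmented weight matrix (W^(l) | diag(b^(l))), of size n l x (n (l-1) + n l).\<close>
definition Wbar :: "(nat \<Rightarrow> nat) \<Rightarrow> (nat \<Rightarrow> nat \<Rightarrow> nat \<Rightarrow> real) \<Rightarrow> (nat \<Rightarrow> nat \<Rightarrow> real)
    \<Rightarrow> nat \<Rightarrow> nat \<Rightarrow> nat \<Rightarrow> real" where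
  "Wbar n W b l i j = (if j < n (l - 1) then W l i j
                       else if j = n (l - 1) + i then b l i else 0)"

text \<open>Stalk value at vertex a^(l): for l = 0 it is the boundary datum u0 at v_x
(a vector of length n 0 + n 1); for l >= 1 it is (a^(l), 1_{n(l+1)}), whose ones
block is boundary data.\<close>
definition abar :: "(nat \<Rightarrow> nat) \<Rightarrow> (nat \<Rightarrow> real) \<Rightarrow> (nat \<Rightarrow> nat \<Rightarrow> real) \<Rightarrow> nat \<Rightarrow> nat \<Rightarrow> real" where
  "abar n u0 a l j = (if l = 0 then u0 j else if j < n l then a l j else 1)"

definition Pmat :: "(nat \<Rightarrow> nat) \<Rightarrow> nat \<Rightarrow> nat \<Rightarrow> nat \<Rightarrow> real" where
  "Pmat n l i j = (if i = j \<and> j < n l then 1 else 0)"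

definition Rmat :: "(nat \<Rightarrow> nat \<Rightarrow> bool) \<Rightarrow> nat \<Rightarrow> nat \<Rightarrow> nat \<Rightarrow> real" where
  "Rmat R l i j = (if i = j \<and> R l i then 1 else 0)"

text \<open>Free coordinates omega = (z, a, yhat): z l (l = 1..k+1), a l (l = 1..k), yhat.\<close>
type_synonym cochain = "(nat \<Rightarrow> nat \<Rightarrow> real) \<times> (nat \<Rightarrow> nat \<Rightarrow> real) \<times> (nat \<Rightarrow> real)"

definition valid_free :: "(nat \<Rightarrow> nat) \<Rightarrow> nat \<Rightarrow> cochain \<Rightarrow> bool" where
  "valid_free n k \<omega> = (case \<omega> of (z, a, y) \<Rightarrow>
     (\<forall>l i. \<not> (1 \<le> l \<and> l \<le> k + 1 \<and> i < n l) \<longrightarrow> z l i = 0) \<and>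
     (\<forall>l i. \<not> (1 \<le> l \<and> l \<le> k \<and> i < n l) \<longrightarrow> a l i = 0) \<and>
     (\<forall>i. n (k + 1) \<le> i \<longrightarrow> y i = 0))"

text \<open>Coboundary components (delta x)_e = F_{v,e} x_v - F_{u,e} x_u for e = u -> v.\<close>
definition delta_w :: "(nat \<Rightarrow> nat) \<Rightarrow> (nat \<Rightarrow> nat \<Rightarrow> nat \<Rightarrow> real) \<Rightarrow> (nat \<Rightarrow> nat \<Rightarrow> real)
    \<Rightarrow> (nat \<Rightarrow> real) \<Rightarrow> cochain \<Rightarrow> nat \<Rightarrow> nat \<Rightarrow> real" where
  "delta_w n W b u0 \<omega> l i = (case \<omega> of (z, a, y) \<Rightarrow>
     z l i - mv (Wbar n W b l) (n (l - 1) + n l) (abar n u0 a (l - 1)) i)"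

definition delta_act :: "(nat \<Rightarrow> nat) \<Rightarrow> (nat \<Rightarrow> nat \<Rightarrow> bool) \<Rightarrow> (nat \<Rightarrow> real) \<Rightarrow> cochain
    \<Rightarrow> nat \<Rightarrow> nat \<Rightarrow> real" where
  "delta_act n R u0 \<omega> l i = (case \<omega> of (z, a, y) \<Rightarrow>
     mv (Pmat n l) (n l + n (Suc l)) (abar n u0 a l) i - mv (Rmat R l) (n l) (z l) i)"

definition delta_out :: "nat \<Rightarrow> cochain \<Rightarrow> nat \<Rightarrow> real" where
  "delta_out k \<omega> i = (case \<omega> of (z, a, y) \<Rightarrow> y i - z (k + 1) i)"

definition energy :: "(nat \<Rightarrow> nat) \<Rightarrow> nat \<Rightarrow> (nat \<Rightarrow> nat \<Rightarrow> nat \<Rightarrow> real) \<Rightarrow> (nat \<Rightarrow> nat \<Rightarrow> real)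
    \<Rightarrow> (nat \<Rightarrow> nat \<Rightarrow> bool) \<Rightarrow> (nat \<Rightarrow> real) \<Rightarrow> cochain \<Rightarrow> real" where
  "energy n k W b R u0 \<omega> =
     (\<Sum>l\<in>{1..k+1}. \<Sum>i<n l. (delta_w n W b u0 \<omega> l i)\<^sup>2) +
     (\<Sum>l\<in>{1..k}. \<Sum>i<n l. (delta_act n R u0 \<omega> l i)\<^sup>2) +
     (\<Sum>i<n (k + 1). (delta_out k \<omega> i)\<^sup>2)"

definition harmonic_ext :: "(nat \<Rightarrow> nat) \<Rightarrow> nat \<Rightarrow> (nat \<Rightarrow> nat \<Rightarrow> nat \<Rightarrow> real) \<Rightarrow> (nat \<Rightarrow> nat \<Rightarrow> real)
    \<Rightarrow> (nat \<Rightarrow> nat \<Rightarrow> bool) \<Rightarrow> (nat \<Rightarrow> real) \<Rightarrow> cochain \<Rightarrow> bool" where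
  "harmonic_ext n k W b R u0 \<omega> =
     (valid_free n k \<omega> \<and>
      (\<forall>\<omega>'. valid_free n k \<omega>' \<longrightarrow> energy n k W b R u0 \<omega> \<le> energy n k W b R u0 \<omega>'))"

definition global_section :: "(nat \<Rightarrow> nat) \<Rightarrow> nat \<Rightarrow> (nat \<Rightarrow> nat \<Rightarrow> nat \<Rightarrow> real) \<Rightarrow> (nat \<Rightarrow> nat \<Rightarrow> real)
    \<Rightarrow> (nat \<Rightarrow> nat \<Rightarrow> bool) \<Rightarrow> (nat \<Rightarrow> real) \<Rightarrow> cochain \<Rightarrow> bool" where
  "global_section n k W b R u0 \<omega> =
     ((\<forall>l\<in>{1..k+1}. \<forall>i<n l. delta_w n W b u0 \<omega> l i = 0) \<and>
      (\<forall>l\<in>{1..k}. \<forall>i<n l. delta_act n R u0 \<omega> l i = 0) \<and>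
      (\<forall>i<n (k + 1). delta_out k \<omega> i = 0))"

definition actual_pattern :: "cochain \<Rightarrow> nat \<Rightarrow> nat \<Rightarrow> bool" where
  "actual_pattern \<omega> l j = (fst \<omega> l j \<ge> 0)"

definition xbar :: "(nat \<Rightarrow> nat) \<Rightarrow> (nat \<Rightarrow> real) \<Rightarrow> nat \<Rightarrow> real" where
  "xbar n x j = (if j < n 0 then x j else 1)"

primrec fwd_a :: "(nat \<Rightarrow> nat) \<Rightarrow> (nat \<Rightarrow> nat \<Rightarrow> nat \<Rightarrow> real) \<Rightarrow> (nat \<Rightarrow> nat \<Rightarrow> real)
    \<Rightarrow> (nat \<Rightarrow> real) \<Rightarrow> nat \<Rightarrow> nat \<Rightarrow> real" where
  "fwd_a n W b x 0 = x"
| "fwd_a n W b x (Suc l) = (\<lambda>i. max 0 (mv (W (Suc l)) (n l) (fwd_a n W b x l) i + b (Suc l) i))"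

definition fwd_z :: "(nat \<Rightarrow> nat) \<Rightarrow> (nat \<Rightarrow> nat \<Rightarrow> nat \<Rightarrow> real) \<Rightarrow> (nat \<Rightarrow> nat \<Rightarrow> real)
    \<Rightarrow> (nat \<Rightarrow> real) \<Rightarrow> nat \<Rightarrow> nat \<Rightarrow> real" where
  "fwd_z n W b x l i = mv (W l) (n (l - 1)) (fwd_a n W b x (l - 1)) i + b l i"

end

theory Submission
  imports Defs
begin

lemma mv_Wbar:
  assumes "i < n l"
  shows "mv (Wbar n W b l) (n (l - 1) + n l) v i = mv (W l) (n (l - 1)) v i + b l i * v (n (l - 1) + i)"
proof -
  let ?p = "n (l - 1)" and ?q = "n l"
  have split: "{..<?p + ?q} = {..<?p} \<union> {?p..<?p + ?q}" by auto
  have s1: "(\<Sum>j<?p. Wbar n W b l i j * v j) = mv (W l) ?p v i"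
    unfolding mv_def by (rule sum.cong) (auto simp: Wbar_def)
  have s2: "(\<Sum>j\<in>{?p..<?p + ?q}. Wbar n W b l i j * v j)
      = (\<Sum>j\<in>{?p..<?p + ?q}. (if j = ?p + i then b l i * v j else 0))"
    by (rule sum.cong) (auto simp: Wbar_def)
  have s3: "(\<Sum>j\<in>{?p..<?p + ?q}. (if j = ?p + i then b l i * v j else 0)) = b l i * v (?p + i)"
    using assms by (simp add: sum.delta)
  have "mv (Wbar n W b l) (?p + ?q) v i = (\<Sum>j<?p. Wbar n W b l i j * v j) + (\<Sum>j\<in>{?p..<?p + ?q}. Wbar n W b l i j * v j)"
    unfolding mv_def split by (subst sum.union_disjoint) auto
  then show ?thesis using s1 s2 s3 by simp
qed

lemma mv_P:
  assumes "1 \<le> l" "i < n l"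
  shows "mv (Pmat n l) (n l + n (Suc l)) (abar n u0 a l) i = a l i"
proof -
  have "mv (Pmat n l) (n l + n (Suc l)) (abar n u0 a l) i
      = (\<Sum>j<n l + n (Suc l). (if j = i then abar n u0 a l j else 0))"
    unfolding mv_def by (rule sum.cong) (auto simp: Pmat_def assms)
  also have "\<dots> = abar n u0 a l i" using assms by (simp add: sum.delta)
  also have "\<dots> = a l i" using assms by (simp add: abar_def)
  finally show ?thesis .
qed

lemma mv_R:
  assumes "i < m"
  shows "mv (Rmat R l) m v i = (if R l i then v i else 0)"
proof -
  have "mv (Rmat R l) m v i = (\<Sum>j<m. (if j = i then (if R l i then v i else 0) else 0))"
    unfolding mv_def by (rule sum.cong) (auto simp: Rmat_def)
  also have "\<dots> = (if R l i then v i else 0)" using assms by (simp add: sum.delta)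
  finally show ?thesis .
qed

lemma abar_cong:
  assumes "1 \<le> l \<Longrightarrow> \<forall>j<n l. a l j = a' l j"
  shows "abar n u0 a l = abar n u0 a' l"
  using assms by (auto simp: abar_def fun_eq_iff)

lemma ss_zero:
  fixes f :: "'a \<Rightarrow> real"
  assumes "finite A"
  shows "(\<Sum>x\<in>A. (f x)\<^sup>2) = 0 \<longleftrightarrow> (\<forall>x\<in>A. f x = 0)"
  using assms by (subst sum_nonneg_eq_0_iff) auto

lemma sss_zero:
  fixes g :: "nat \<Rightarrow> nat \<Rightarrow> real"
  assumes "finite L"
  shows "(\<Sum>l\<in>L. \<Sum>i<m l. (g l i)\<^sup>2) = 0 \<longleftrightarrow> (\<forall>l\<in>L. \<forall>i<m l. g l i = 0)"
proof -
  have "(\<Sum>l\<in>L. \<Sum>i<m l. (g l i)\<^sup>2) = 0 \<longleftrightarrow> (\<forall>l\<in>L. (\<Sum>i<m l. (g l i)\<^sup>2) = 0)"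
    using assms by (subst sum_nonneg_eq_0_iff) (auto intro: sum_nonneg)
  also have "\<dots> \<longleftrightarrow> (\<forall>l\<in>L. \<forall>i<m l. g l i = 0)"
    by (auto simp: ss_zero)
  finally show ?thesis .
qed

lemma sss_nonneg:
  fixes g :: "nat \<Rightarrow> nat \<Rightarrow> real"
  shows "0 \<le> (\<Sum>l\<in>L. \<Sum>i<m l. (g l i)\<^sup>2)"
  by (intro sum_nonneg) auto

lemma energy_nonneg: "0 \<le> energy n k W b R u0 \<omega>"
  unfolding energy_def by (intro add_nonneg_nonneg sss_nonneg sum_nonneg) auto

lemma energy_zero_iff: "energy n k W b R u0 \<omega> = 0 \<longleftrightarrow> global_section n k W b R u0 \<omega>"
proof -
  let ?A = "(\<Sum>l\<in>{1..k+1}. \<Sum>i<n l. (delta_w n W b u0 \<omega> l i)\<^sup>2)"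
  let ?B = "(\<Sum>l\<in>{1..k}. \<Sum>i<n l. (delta_act n R u0 \<omega> l i)\<^sup>2)"
  let ?C = "(\<Sum>i<n (k + 1). (delta_out k \<omega> i)\<^sup>2)"
  have h1: "0 \<le> ?A" by (rule sss_nonneg)
  have h2: "0 \<le> ?B" by (rule sss_nonneg)
  have h3: "0 \<le> ?C" by (rule sum_nonneg) simp
  from h1 h2 h3 have "energy n k W b R u0 \<omega> = 0 \<longleftrightarrow> ?A = 0 \<and> ?B = 0 \<and> ?C = 0"
    unfolding energy_def by linarith
  also have "\<dots> \<longleftrightarrow> global_section n k W b R u0 \<omega>"
    unfolding global_section_def
    by (simp only: sss_zero[OF finite_atLeastAtMost] ss_zero[OF finite_lessThan] lessThan_iff Ball_def)
  finally show ?thesis .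
qed

primrec Aseq :: "(nat \<Rightarrow> nat) \<Rightarrow> (nat \<Rightarrow> nat \<Rightarrow> nat \<Rightarrow> real) \<Rightarrow> (nat \<Rightarrow> nat \<Rightarrow> real)
    \<Rightarrow> (nat \<Rightarrow> nat \<Rightarrow> bool) \<Rightarrow> (nat \<Rightarrow> real) \<Rightarrow> nat \<Rightarrow> nat \<Rightarrow> real" where
  "Aseq n W b R u0 0 = (\<lambda>i. 0)"
| "Aseq n W b R u0 (Suc l) = (\<lambda>i. if R (Suc l) i then
      mv (Wbar n W b (Suc l)) (n l + n (Suc l)) (abar n u0 (\<lambda>m. Aseq n W b R u0 l) l) i else 0)"

definition Zc where
  "Zc n W b R u0 l i = mv (Wbar n W b l) (n (l - 1) + n l) (abar n u0 (\<lambda>m. Aseq n W b R u0 (l - 1)) (l - 1)) i"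

definition om0 :: "(nat \<Rightarrow> nat) \<Rightarrow> nat \<Rightarrow> (nat \<Rightarrow> nat \<Rightarrow> nat \<Rightarrow> real) \<Rightarrow> (nat \<Rightarrow> nat \<Rightarrow> real)
    \<Rightarrow> (nat \<Rightarrow> nat \<Rightarrow> bool) \<Rightarrow> (nat \<Rightarrow> real) \<Rightarrow> cochain" where
  "om0 n k W b R u0 = ((\<lambda>l i. if 1 \<le> l \<and> l \<le> k + 1 \<and> i < n l then Zc n W b R u0 l i else 0),
     (\<lambda>l i. if 1 \<le> l \<and> l \<le> k \<and> i < n l then Aseq n W b R u0 l i else 0),
     (\<lambda>i. if i < n (k + 1) then Zc n W b R u0 (k + 1) i else 0))"

lemma Aseq_Zc: "1 \<le> l \<Longrightarrow> Aseq n W b R u0 l i = (if R l i then Zc n W b R u0 l i else 0)"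
  by (cases l) (auto simp: Zc_def)

lemma om0_valid: "valid_free n k (om0 n k W b R u0)"
  unfolding valid_free_def om0_def by auto

lemma om0_gs: "global_section n k W b R u0 (om0 n k W b R u0)"
proof -
  obtain z a y where zay: "om0 n k W b R u0 = (z, a, y)" by (cases "om0 n k W b R u0") auto
  have zd: "z = (\<lambda>l i. if 1 \<le> l \<and> l \<le> k + 1 \<and> i < n l then Zc n W b R u0 l i else 0)"
   and ad: "a = (\<lambda>l i. if 1 \<le> l \<and> l \<le> k \<and> i < n l then Aseq n W b R u0 l i else 0)"
   and yd: "y = (\<lambda>i. if i < n (k + 1) then Zc n W b R u0 (k + 1) i else 0)"
    using zay unfolding om0_def by auto
  have ab: "abar n u0 a (l - 1) = abar n u0 (\<lambda>m. Aseq n W b R u0 (l - 1)) (l - 1)" if "l \<le> k + 1" for l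
    by (rule abar_cong) (use that in \<open>auto simp: ad\<close>)
  have w: "\<forall>l\<in>{1..k+1}. \<forall>i<n l. delta_w n W b u0 (z, a, y) l i = 0"
  proof (intro ballI allI impI)
    fix l i assume l: "l \<in> {1..k+1}" and i: "i < n l"
    show "delta_w n W b u0 (z, a, y) l i = 0"
      unfolding delta_w_def using l i ab[of l] by (simp add: zd Zc_def)
  qed
  have act: "\<forall>l\<in>{1..k}. \<forall>i<n l. delta_act n R u0 (z, a, y) l i = 0"
  proof (intro ballI allI impI)
    fix l i assume l: "l \<in> {1..k}" and i: "i < n l"
    have "mv (Pmat n l) (n l + n (Suc l)) (abar n u0 a l) i = a l i" using l i by (intro mv_P) auto
    moreover have "mv (Rmat R l) (n l) (z l) i = (if R l i then z l i else 0)" using i by (rule mv_R)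
    ultimately show "delta_act n R u0 (z, a, y) l i = 0"
      using l i by (simp add: delta_act_def ad zd Aseq_Zc)
  qed
  have out: "\<forall>i<n (k + 1). delta_out k (z, a, y) i = 0"
    by (auto simp: delta_out_def yd zd)
  show ?thesis unfolding zay global_section_def using w act out by blast
qed

lemma om0_harm: "harmonic_ext n k W b R u0 (om0 n k W b R u0)"
  unfolding harmonic_ext_def using om0_valid energy_nonneg om0_gs energy_zero_iff by metis

lemma gs_unique:
  assumes v: "valid_free n k (z, a, y)" and g: "global_section n k W b R u0 (z, a, y)"
  shows "(z, a, y) = om0 n k W b R u0"
proof -
  have w: "\<And>l i. l \<in> {1..k+1} \<Longrightarrow> i < n l \<Longrightarrow>
      z l i = mv (Wbar n W b l) (n (l - 1) + n l) (abar n u0 a (l - 1)) i"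
    using g unfolding global_section_def delta_w_def by auto
  have act: "\<And>l i. l \<in> {1..k} \<Longrightarrow> i < n l \<Longrightarrow> a l i = (if R l i then z l i else 0)"
  proof -
    fix l i assume l: "l \<in> {1..k}" and i: "i < n l"
    have "mv (Pmat n l) (n l + n (Suc l)) (abar n u0 a l) i = a l i" using l i by (intro mv_P) auto
    moreover have "mv (Rmat R l) (n l) (z l) i = (if R l i then z l i else 0)" using i by (rule mv_R)
    ultimately show "a l i = (if R l i then z l i else 0)"
      using g l i unfolding global_section_def delta_act_def by auto
  qed
  have out: "\<And>i. i < n (k + 1) \<Longrightarrow> y i = z (k + 1) i"
    using g unfolding global_section_def delta_out_def by auto
  have ab: "abar n u0 a (l - 1) = abar n u0 (\<lambda>m. Aseq n W b R u0 (l - 1)) (l - 1)"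
    if "l \<le> k + 1" "\<forall>j<n (l - 1). 1 \<le> l - 1 \<longrightarrow> a (l - 1) j = Aseq n W b R u0 (l - 1) j" for l
    by (rule abar_cong) (use that in auto)
  have zA: "z l i = Zc n W b R u0 l i"
    if "l \<in> {1..k+1}" "i < n l" "\<forall>j<n (l - 1). 1 \<le> l - 1 \<longrightarrow> a (l - 1) j = Aseq n W b R u0 (l - 1) j" for l i
    using that w[of l i] ab[of l] by (simp add: Zc_def)
  have aA: "\<forall>i<n l. a l i = Aseq n W b R u0 l i" if "1 \<le> l" "l \<le> k" for l
    using that
  proof (induction l)
    case 0 then show ?case by simp
  next
    case (Suc m)
    show ?case
    proof (intro allI impI)
      fix i assume i: "i < n (Suc m)"
      have pre: "\<forall>j<n (Suc m - 1). 1 \<le> Suc m - 1 \<longrightarrow> a (Suc m - 1) j = Aseq n W b R u0 (Suc m - 1) j"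
        using Suc by auto
      have "z (Suc m) i = Zc n W b R u0 (Suc m) i" using zA[OF _ i pre] Suc.prems by auto
      then show "a (Suc m) i = Aseq n W b R u0 (Suc m) i"
        using act[of "Suc m" i] Suc.prems i Aseq_Zc[of "Suc m"] by auto
    qed
  qed
  have zall: "z l i = Zc n W b R u0 l i" if "l \<in> {1..k+1}" "i < n l" for l i
    using zA[OF that] aA[of "l - 1"] that by auto
  have "z = fst (om0 n k W b R u0)"
    using v zall unfolding om0_def valid_free_def by (auto simp: fun_eq_iff)
  moreover have "a = fst (snd (om0 n k W b R u0))"
    using v aA unfolding om0_def valid_free_def by (auto simp: fun_eq_iff)
  moreover have "y = snd (snd (om0 n k W b R u0))"
    using v out zall unfolding om0_def valid_free_def by (auto simp: fun_eq_iff)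
  ultimately show ?thesis by (simp add: prod_eq_iff)
qed

lemma harm_gs:
  assumes "harmonic_ext n k W b R u0 \<omega>"
  shows "global_section n k W b R u0 \<omega> \<and> valid_free n k \<omega>"
proof -
  have "energy n k W b R u0 \<omega> \<le> energy n k W b R u0 (om0 n k W b R u0)"
    using assms om0_valid unfolding harmonic_ext_def by blast
  also have "\<dots> = 0" using om0_gs energy_zero_iff by blast
  finally have "energy n k W b R u0 \<omega> = 0" using energy_nonneg by (metis antisym)
  then show ?thesis using assms energy_zero_iff unfolding harmonic_ext_def by blast
qed

lemma harm_iff: "harmonic_ext n k W b R u0 \<omega> \<longleftrightarrow> \<omega> = om0 n k W b R u0"
  using harm_gs gs_unique om0_harm by (metis prod_cases3)

lemma fwd_a_Suc: "fwd_a n W b x (Suc m) i = max 0 (fwd_z n W b x (Suc m) i)"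
  by (simp add: fwd_z_def)

lemma fwd_track:
  assumes w: "\<forall>l\<in>{1..k+1}. \<forall>i<n l. z l i = mv (Wbar n W b l) (n (l - 1) + n l) (abar n (xbar n x) a (l - 1)) i"
    and step: "\<forall>l\<in>{1..k}. \<forall>i<n l. z l i = fwd_z n W b x l i \<longrightarrow> a l i = max 0 (z l i)"
  shows "1 \<le> l \<Longrightarrow> l \<le> k \<Longrightarrow> \<forall>i<n l. z l i = fwd_z n W b x l i \<and> a l i = fwd_a n W b x l i"
proof (induction l)
  case 0 then show ?case by simp
next
  case (Suc m)
  show ?case
  proof (intro allI impI)
    fix i assume i: "i < n (Suc m)"
    have ab: "abar n (xbar n x) a m j = fwd_a n W b x m j" if j: "j < n m" for j
    proof (cases m)
      case 0 then show ?thesis using j by (simp add: abar_def xbar_def)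
    next
      case (Suc m')
      then show ?thesis using j Suc.IH Suc.prems by (simp add: abar_def)
    qed
    have ab1: "abar n (xbar n x) a m (n m + i) = 1"
      by (simp add: abar_def xbar_def)
    have "z (Suc m) i = mv (Wbar n W b (Suc m)) (n m + n (Suc m)) (abar n (xbar n x) a m) i"
      using w Suc.prems i by auto
    also have "\<dots> = mv (W (Suc m)) (n m) (abar n (xbar n x) a m) i + b (Suc m) i"
      using mv_Wbar[of i n "Suc m" W b "abar n (xbar n x) a m"] i ab1 by simp
    also have "mv (W (Suc m)) (n m) (abar n (xbar n x) a m) i = mv (W (Suc m)) (n m) (fwd_a n W b x m) i"
      unfolding mv_def by (rule sum.cong) (auto simp: ab)
    finally have zf: "z (Suc m) i = fwd_z n W b x (Suc m) i" by (simp add: fwd_z_def)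
    moreover have "a (Suc m) i = fwd_a n W b x (Suc m) i"
      using step Suc.prems i zf fwd_a_Suc[of n W b x m i] by auto
    ultimately show "z (Suc m) i = fwd_z n W b x (Suc m) i \<and> a (Suc m) i = fwd_a n W b x (Suc m) i" ..
  qed
qed

lemma gs_eqs:
  assumes g: "global_section n k W b R u0 (z, a, y)"
  shows "(\<forall>l\<in>{1..k+1}. \<forall>i<n l.
                  z l i = mv (Wbar n W b l) (n (l - 1) + n l) (abar n u0 a (l - 1)) i) \<and>
              (\<forall>l\<in>{1..k}. \<forall>i<n l. a l i = mv (Rmat R l) (n l) (z l) i) \<and>
              (\<forall>i<n (k + 1). y i = z (k + 1) i)"
proof -
  have act: "a l i = mv (Rmat R l) (n l) (z l) i" if l: "l \<in> {1..k}" and i: "i < n l" for l i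
  proof -
    have "mv (Pmat n l) (n l + n (Suc l)) (abar n u0 a l) i = a l i" using l i by (intro mv_P) auto
    then show ?thesis using g l i unfolding global_section_def delta_act_def by auto
  qed
  then show ?thesis using g unfolding global_section_def delta_w_def delta_out_def by auto
qed

theorem proposition3p4:
  fixes k :: nat and n :: "nat \<Rightarrow> nat"
    and W :: "nat \<Rightarrow> nat \<Rightarrow> nat \<Rightarrow> real" and b :: "nat \<Rightarrow> nat \<Rightarrow> real"
  shows "(\<forall>R u0. (\<exists>!\<omega>. harmonic_ext n k W b R u0 \<omega>) \<and>
           (\<forall>z a y. harmonic_ext n k W b R u0 (z, a, y) \<longrightarrow>
              (\<forall>l\<in>{1..k+1}. \<forall>i<n l.
                  z l i = mv (Wbar n W b l) (n (l - 1) + n l) (abar n u0 a (l - 1)) i) \<and>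
              (\<forall>l\<in>{1..k}. \<forall>i<n l. a l i = mv (Rmat R l) (n l) (z l) i) \<and>
              (\<forall>i<n (k + 1). y i = z (k + 1) i))) \<and>
         (\<forall>x. (\<forall>l\<in>{1..k}. \<forall>j<n l. fwd_z n W b x l j \<noteq> 0) \<longrightarrow>
           (\<forall>R \<omega>. harmonic_ext n k W b R (xbar n x) \<omega> \<longrightarrow>
              (global_section n k W b (actual_pattern \<omega>) (xbar n x) \<omega> \<longleftrightarrow>
               (\<forall>l\<in>{1..k}. \<forall>j<n l. R l j = (fwd_z n W b x l j \<ge> 0)))))"
proof (rule conjI)
  show "\<forall>R u0. (\<exists>!\<omega>. harmonic_ext n k W b R u0 \<omega>) \<and>
           (\<forall>z a y. harmonic_ext n k W b R u0 (z, a, y) \<longrightarrow>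
              (\<forall>l\<in>{1..k+1}. \<forall>i<n l.
                  z l i = mv (Wbar n W b l) (n (l - 1) + n l) (abar n u0 a (l - 1)) i) \<and>
              (\<forall>l\<in>{1..k}. \<forall>i<n l. a l i = mv (Rmat R l) (n l) (z l) i) \<and>
              (\<forall>i<n (k + 1). y i = z (k + 1) i))"
    using harm_iff harm_gs gs_eqs by metis
next
  show "\<forall>x. (\<forall>l\<in>{1..k}. \<forall>j<n l. fwd_z n W b x l j \<noteq> 0) \<longrightarrow>
           (\<forall>R \<omega>. harmonic_ext n k W b R (xbar n x) \<omega> \<longrightarrow>
              (global_section n k W b (actual_pattern \<omega>) (xbar n x) \<omega> \<longleftrightarrow>
               (\<forall>l\<in>{1..k}. \<forall>j<n l. R l j = (fwd_z n W b x l j \<ge> 0))))"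
  proof (intro allI impI)
  fix x R \<omega>
  assume nz: "\<forall>l\<in>{1..k}. \<forall>j<n l. fwd_z n W b x l j \<noteq> 0"
    and h: "harmonic_ext n k W b R (xbar n x) \<omega>"
  obtain z a y where om: "\<omega> = (z, a, y)" by (cases \<omega>) auto
  have g: "global_section n k W b R (xbar n x) (z, a, y)" using h harm_gs om by blast
  note eqs = gs_eqs[OF g]
  have w: "\<forall>l\<in>{1..k+1}. \<forall>i<n l. z l i = mv (Wbar n W b l) (n (l - 1) + n l) (abar n (xbar n x) a (l - 1)) i"
    using eqs by blast
  have aR: "a l i = (if R l i then z l i else 0)" if "l \<in> {1..k}" "i < n l" for l i
    using eqs that mv_R[of i "n l" R l "z l"] by auto
  have gsA: "global_section n k W b (actual_pattern \<omega>) (xbar n x) \<omega> \<longleftrightarrow>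
      (\<forall>l\<in>{1..k}. \<forall>i<n l. a l i = max 0 (z l i))"
  proof -
    have "delta_act n (actual_pattern \<omega>) (xbar n x) (z, a, y) l i = a l i - max 0 (z l i)"
      if l: "l \<in> {1..k}" and i: "i < n l" for l i
    proof -
      have "mv (Pmat n l) (n l + n (Suc l)) (abar n (xbar n x) a l) i = a l i" using l i by (intro mv_P) auto
      moreover have "mv (Rmat (actual_pattern \<omega>) l) (n l) (z l) i = max 0 (z l i)"
        using i by (simp add: mv_R actual_pattern_def om)
      ultimately show ?thesis by (simp add: delta_act_def)
    qed
    then show ?thesis using g unfolding om global_section_def delta_w_def delta_out_def
      by auto
  qed
  show "global_section n k W b (actual_pattern \<omega>) (xbar n x) \<omega> \<longleftrightarrow>
               (\<forall>l\<in>{1..k}. \<forall>j<n l. R l j = (fwd_z n W b x l j \<ge> 0))"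
  proof
    assume "global_section n k W b (actual_pattern \<omega>) (xbar n x) \<omega>"
    then have mx: "\<forall>l\<in>{1..k}. \<forall>i<n l. a l i = max 0 (z l i)" using gsA by blast
    then have st: "\<forall>l\<in>{1..k}. \<forall>i<n l. z l i = fwd_z n W b x l i \<longrightarrow> a l i = max 0 (z l i)" by blast
    show "\<forall>l\<in>{1..k}. \<forall>j<n l. R l j = (fwd_z n W b x l j \<ge> 0)"
    proof (intro ballI allI impI)
      fix l j assume l: "l \<in> {1..k}" and j: "j < n l"
      have zf: "z l j = fwd_z n W b x l j" using fwd_track[OF w st, of l] l j by auto
      have "(if R l j then z l j else 0) = max 0 (z l j)" using aR[OF l j] mx l j by auto
      then show "R l j = (fwd_z n W b x l j \<ge> 0)" using nz l j zf
        by (cases "R l j") (auto simp: max_def split: if_splits)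
    qed
  next
    assume Rf: "\<forall>l\<in>{1..k}. \<forall>j<n l. R l j = (fwd_z n W b x l j \<ge> 0)"
    have st: "\<forall>l\<in>{1..k}. \<forall>i<n l. z l i = fwd_z n W b x l i \<longrightarrow> a l i = max 0 (z l i)"
      using Rf aR by (auto simp: max_def)
    have "\<forall>l\<in>{1..k}. \<forall>i<n l. a l i = max 0 (z l i)"
      using fwd_track[OF w st] st by auto
    then show "global_section n k W b (actual_pattern \<omega>) (xbar n x) \<omega>" using gsA by blast
  qed
  qed
qed

end
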